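(* Let $\nu\ge1$, $d:\mathbb{Z}^\nu\to\mathbb{C}$ bounded, $J=J_0+D$ on $\ell^2(\mathbb{Z}^\nu)$. Suppose that for some $j\in\{1,\dots,\nu\}$, $$\sup_{(k_1,\dots,k_{j-1},k_{j+1},\dots,k_\nu)\in\mathbb{Z}^{\nu-1}}\big|\Im\big(d(k_1,\dots,k_{j-1},n,k_{j+1},\dots,k_\nu)\big)\big|\to0$$ as $n\to+\infty$ (or as $n\to-\infty$). (For $\nu=1$ this means $\Im(d(n))\to0$ as $n\to+\infty$, or as $n\to-\infty$.) Then every boundary eigenvalue of $J$ is real.
   Context: $J_0$ is the discrete Laplacian on $\ell^2(\mathbb{Z}^\nu)$: $(J_0u)(k)=\sum_{l\in\mathbb{Z}^\nu:\|l\|_1=1}u(k+l)$, $\|l\|_1=\sum_j|l_j|$. $D$ is multiplication by $d$. The numerical range is $\operatorname{Num}(J)=\{\langle Ju,u\rangle:\|u\|=1\}$, and a boundary eigenvalue of $J$ is an eigenvalue of $J$ lying in the topological boundary of $\operatorname{Num}(J)$. *)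

theory Defs
  imports "HOL-Analysis.Analysis"
begin

text \<open>Lattice points of Z^nu are vectors int^'n, with 'n a finite index type (CARD('n) = nu >= 1).
  Sequences on Z^nu are functions int^'n => complex.\<close>

definition l2 :: "('a \<Rightarrow> complex) set" where
  "l2 = {u. (\<lambda>k. (cmod (u k))^2) summable_on UNIV}"

definition l2norm :: "('a \<Rightarrow> complex) \<Rightarrow> real" where
  "l2norm u = sqrt (infsum (\<lambda>k. (cmod (u k))^2) UNIV)"

definition l2inner :: "('a \<Rightarrow> complex) \<Rightarrow> ('a \<Rightarrow> complex) \<Rightarrow> complex" where
  "l2inner u v = infsum (\<lambda>k. u k * cnj (v k)) UNIV"

definition J0 :: "(int^'n \<Rightarrow> complex) \<Rightarrow> int^'n \<Rightarrow> complex" where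
  "J0 u k = (\<Sum>l\<in>{l :: int^'n. (\<Sum>i\<in>UNIV. \<bar>l $ i\<bar>) = 1}. u (k + l))"

definition jacobi :: "(int^'n \<Rightarrow> complex) \<Rightarrow> (int^'n \<Rightarrow> complex) \<Rightarrow> int^'n \<Rightarrow> complex" where
  "jacobi d u k = J0 u k + d k * u k"

definition numrange :: "(int^'n \<Rightarrow> complex) \<Rightarrow> complex set" where
  "numrange d = {l2inner (jacobi d u) u | u. u \<in> l2 \<and> l2norm u = 1}"

definition is_eigenvalue :: "(int^'n \<Rightarrow> complex) \<Rightarrow> complex \<Rightarrow> bool" where
  "is_eigenvalue d z \<longleftrightarrow> (\<exists>u\<in>l2. u \<noteq> (\<lambda>_. 0) \<and> jacobi d u = (\<lambda>k. z * u k))"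

definition boundary_eigenvalue :: "(int^'n \<Rightarrow> complex) \<Rightarrow> complex \<Rightarrow> bool" where
  "boundary_eigenvalue d z \<longleftrightarrow> is_eigenvalue d z \<and> z \<in> frontier (numrange d)"

end

theory Submission
  imports Defs
begin


definition nbr :: "(int^'n) set" where "nbr = {l. (\<Sum>i\<in>UNIV. \<bar>l $ i\<bar>) = 1}"

lemma J0_nbr: "J0 u k = (\<Sum>l\<in>nbr. u (k + l))"
  by (simp add: J0_def nbr_def)

lemma nbr_le1: "l \<in> nbr \<Longrightarrow> \<bar>l $ i\<bar> \<le> 1"
proof -
  assume "l \<in> nbr"
  hence "(\<Sum>i\<in>UNIV. \<bar>l $ i\<bar>) = 1" by (simp add: nbr_def)
  moreover have "\<bar>l $ i\<bar> \<le> (\<Sum>i\<in>UNIV. \<bar>l $ i\<bar>)"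
    by (rule member_le_sum) auto
  ultimately show ?thesis by simp
qed

lemma finite_nbr: "finite (nbr :: (int^'n) set)"
proof -
  have "nbr \<subseteq> (\<lambda>f. \<chi> i. f i) ` (PiE (UNIV::'n set) (\<lambda>_. {-1..1::int}))"
  proof
    fix l :: "int^'n" assume l: "l \<in> nbr"
    have "(\<lambda>i. l $ i) \<in> PiE UNIV (\<lambda>_. {-1..1::int})"
      using nbr_le1[OF l] by (auto simp: abs_le_iff)
    moreover have "l = (\<chi> i. (\<lambda>i. l $ i) i)" by simp
    ultimately show "l \<in> (\<lambda>f. \<chi> i. f i) ` (PiE (UNIV::'n set) (\<lambda>_. {-1..1::int}))" by blast
  qed
  moreover have "finite (PiE (UNIV::'n set) (\<lambda>_. {-1..1::int}))"
    by (rule finite_PiE) auto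
  ultimately show ?thesis by (meson finite_imageI finite_subset)
qed

lemma zero_notin_nbr: "0 \<notin> nbr"
  by (simp add: nbr_def)

lemma nbr_uminus: "l \<in> nbr \<Longrightarrow> - l \<in> nbr"
  by (simp add: nbr_def)

lemma nbr_axis:
  assumes l: "l \<in> nbr" and lj: "\<bar>l $ j\<bar> = 1"
  shows "l = axis j (l $ j)"
proof -
  have s: "(\<Sum>i\<in>UNIV. \<bar>l $ i\<bar>) = 1" using l by (simp add: nbr_def)
  have "(\<Sum>i\<in>UNIV. \<bar>l $ i\<bar>) = \<bar>l $ j\<bar> + (\<Sum>i\<in>UNIV - {j}. \<bar>l $ i\<bar>)"
    by (simp add: sum.remove)
  hence "(\<Sum>i\<in>UNIV - {j}. \<bar>l $ i\<bar>) = 0" using s lj by simp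
  hence "\<forall>i\<in>UNIV - {j}. \<bar>l $ i\<bar> = 0"
    by (subst (asm) sum_nonneg_eq_0_iff) auto
  thus ?thesis by (auto simp: vec_eq_iff axis_def)
qed

lemma axis_nbr: "\<bar>s\<bar> = 1 \<Longrightarrow> axis j (s::int) \<in> nbr"
proof -
  assume s: "\<bar>s\<bar> = 1"
  have "(\<Sum>i\<in>UNIV. \<bar>axis j s $ i\<bar>) = (\<Sum>i\<in>UNIV. if i = j then 1 else 0)"
    by (rule sum.cong) (auto simp: axis_def s)
  also have "\<dots> = 1" by simp
  finally show ?thesis by (simp add: nbr_def)
qed

lemma vanish:
  fixes u :: "int^'n \<Rightarrow> complex"
  assumes eq: "\<And>k. J0 u k = c k * u k" and s: "\<bar>s\<bar> = (1::int)"
    and z: "\<And>k. s * k $ j \<ge> N \<Longrightarrow> u k = 0"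
  shows "u k = 0"
proof -
  have ss: "s * s = 1" using s abs_mult_self_eq[of s] by simp
  have P: "\<forall>k. s * k $ j \<ge> N - int p \<longrightarrow> u k = 0" for p
  proof (induction p)
    case 0 then show ?case using z by simp
  next
    case (Suc p)
    show ?case
    proof (intro allI impI)
      fix k :: "int^'n" assume k: "s * k $ j \<ge> N - int (Suc p)"
      show "u k = 0"
      proof (cases "s * k $ j \<ge> N - int p")
        case True then show ?thesis using Suc.IH by blast
      next
        case False
        hence kj: "s * k $ j = N - int p - 1" using k by simp
        define k' where "k' = k + axis j s"
        have k'j: "s * k' $ j = N - int p" unfolding k'_def using kj ss
          by (simp add: axis_def algebra_simps)
        hence uk': "u k' = 0" using Suc.IH by simp
        have mem: "- axis j s \<in> nbr" using axis_nbr[OF s] nbr_uminus by blast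
        have rest: "u (k' + l) = 0" if l: "l \<in> nbr - {- axis j s}" for l
        proof -
          have "s * l $ j \<ge> 0"
          proof (rule ccontr)
            assume neg: "\<not> s * l $ j \<ge> 0"
            have "\<bar>l $ j\<bar> \<le> 1" using l nbr_le1 by blast
            hence "\<bar>s * l $ j\<bar> \<le> 1" using s by (simp add: abs_mult)
            hence sl: "s * l $ j = -1" using neg by linarith
            have "l $ j = s * (s * l $ j)" using ss by (simp add: mult.assoc[symmetric])
            hence lj: "l $ j = - s" using sl by simp
            have "l = axis j (l $ j)" using nbr_axis[of l j] l lj s by auto
            hence "l = - axis j s" using lj by (simp add: vec_eq_iff axis_def)
            thus False using l by simp
          qed
          hence "s * (k' + l) $ j \<ge> N - int p" using k'j by (simp add: algebra_simps)
          thus ?thesis using Suc.IH by blast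
        qed
        have "J0 u k' = u (k' + - axis j s) + (\<Sum>l\<in>nbr - {- axis j s}. u (k' + l))"
          unfolding J0_nbr by (rule sum.remove[OF finite_nbr mem])
        also have "\<dots> = u k" using rest by (simp add: k'_def)
        finally show ?thesis using eq[of k'] uk' by simp
      qed
    qed
  qed
  show ?thesis using P[of "nat (N - s * k $ j)"] by auto
qed



lemma jacobi_lin:
  "jacobi d (\<lambda>m. x m + c * y m) m = jacobi d x m + c * jacobi d y m"
  by (simp add: jacobi_def J0_nbr sum.distrib sum_distrib_left algebra_simps)

lemma jacobi_scale:
  "jacobi d (\<lambda>m. c * y m) m = c * jacobi d y m"
  using jacobi_lin[of d "\<lambda>_. 0" c y m] by (simp add: jacobi_def J0_nbr)

lemma infsum_fin_supp:
  fixes f :: "'a \<Rightarrow> 'b::{comm_monoid_add, t2_space}"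
  assumes "finite F" "\<And>x. x \<notin> F \<Longrightarrow> f x = 0"
  shows "infsum f UNIV = sum f F" "f summable_on UNIV"
proof -
  have "infsum f UNIV = infsum f F" by (rule infsum_cong_neutral) (use assms in auto)
  thus "infsum f UNIV = sum f F" using assms by simp
  have "f summable_on UNIV \<longleftrightarrow> f summable_on F" by (rule summable_on_cong_neutral) (use assms in auto)
  thus "f summable_on UNIV" using assms by simp
qed

lemma cmod_add_sq: "(cmod (x + y))\<^sup>2 = (cmod x)\<^sup>2 + 2 * Re (cnj y * x) + (cmod y)\<^sup>2"
  unfolding cmod_power2 by (simp add: power2_eq_square algebra_simps)

lemma interior_lemma:
  fixes d u :: "int^'n \<Rightarrow> complex" and z :: complex and k :: "int^'n"
  assumes u: "u \<in> l2" and eig: "jacobi d u = (\<lambda>m. z * u m)"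
    and uk: "u k \<noteq> 0" and im: "Im (d k) \<noteq> Im z"
  shows "z \<in> interior (numrange d)"
proof -
  define \<delta> where "\<delta> = (\<lambda>m::int^'n. if m = k then (1::complex) else 0)"
  define G where "G = {m. k - m \<in> nbr}"
  have G_img: "G = (\<lambda>l. k - l) ` nbr"
  proof (rule set_eqI)
    fix m
    show "m \<in> G \<longleftrightarrow> m \<in> (\<lambda>l. k - l) ` nbr"
    proof
      assume "m \<in> G"
      hence "k - m \<in> nbr" by (simp add: G_def)
      moreover have "m = k - (k - m)" by simp
      ultimately show "m \<in> (\<lambda>l. k - l) ` nbr" by blast
    next
      assume "m \<in> (\<lambda>l. k - l) ` nbr"
      then obtain l where "l \<in> nbr" "m = k - l" by blast
      thus "m \<in> G" by (simp add: G_def)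
    qed
  qed
  have finG: "finite G" unfolding G_img by (intro finite_imageI finite_nbr)
  have kG: "k \<notin> G" unfolding G_def using zero_notin_nbr by simp
  define F where "F = insert k G"
  have finF: "finite F" using finG by (simp add: F_def)
  define T where "T = jacobi d \<delta>"
  have J0d: "J0 \<delta> m = (if k - m \<in> nbr then 1 else 0)" for m
  proof -
    have "J0 \<delta> m = (\<Sum>l\<in>nbr. if l = k - m then 1 else 0)"
      unfolding J0_nbr \<delta>_def by (rule sum.cong) (auto simp: eq_diff_eq add.commute)
    also have "\<dots> = (if k - m \<in> nbr then 1 else 0)"
      using sum.delta[OF finite_nbr, of "k - m" "\<lambda>_. 1::complex"] by simp
    finally show ?thesis .
  qed
  have Tm: "T m = (if k - m \<in> nbr then 1 else 0) + d m * \<delta> m" for m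
    by (simp add: T_def jacobi_def J0d)
  have T0: "T m = 0" if "m \<notin> F" for m
    using that by (simp add: Tm F_def G_def \<delta>_def)
  have Tk: "T k = d k" by (simp add: Tm zero_notin_nbr \<delta>_def)
  define A where "A = infsum (\<lambda>m. (cmod (u m))\<^sup>2) UNIV"
  have sumA: "(\<lambda>m. (cmod (u m))\<^sup>2) summable_on UNIV" using u by (simp add: l2_def)
  have A_pos: "A > 0"
  proof -
    have i: "infsum (\<lambda>m. (cmod (u m))\<^sup>2) {k} \<le> A"
      unfolding A_def by (rule infsum_mono_neutral) (auto simp: sumA)
    have p: "(cmod (u k))\<^sup>2 > 0" using uk by simp
    have i2: "(cmod (u k))\<^sup>2 \<le> A" using i by simp
    show ?thesis using i2 p by linarith
  qed
  define a' where "a' = (\<Sum>m\<in>F. T m * cnj (u m))"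
  have J0uk: "J0 u k = (z - d k) * u k"
    using fun_cong[OF eig, of k] by (simp add: jacobi_def algebra_simps)
  have a'_eq: "a' = cnj (J0 u k) + d k * cnj (u k)"
  proof -
    have "a' = T k * cnj (u k) + (\<Sum>m\<in>G. T m * cnj (u m))"
      unfolding a'_def F_def using finG kG by simp
    also have "(\<Sum>m\<in>G. T m * cnj (u m)) = (\<Sum>m\<in>G. cnj (u m))"
      by (rule sum.cong) (use kG in \<open>auto simp: Tm \<delta>_def G_def\<close>)
    also have "\<dots> = (\<Sum>l\<in>nbr. cnj (u (k - l)))"
      unfolding G_img by (subst sum.reindex) (auto simp: inj_on_def)
    also have "\<dots> = (\<Sum>l\<in>nbr. cnj (u (k + l)))"
      by (rule sum.reindex_bij_witness[of _ uminus uminus]) (auto simp: nbr_uminus)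
    also have "\<dots> = cnj (J0 u k)" by (simp add: J0_nbr)
    finally show ?thesis using Tk by simp
  qed
  define a where "a = a' - z * cnj (u k)"
  have a_ne: "a \<noteq> 0"
  proof
    assume "a = 0"
    hence "cnj (u k) * (cnj z - cnj (d k) + d k - z) = 0"
      unfolding a_def a'_eq J0uk by (simp add: algebra_simps)
    hence "cnj z - cnj (d k) + d k - z = 0" using uk by simp
    hence "Im (cnj z - cnj (d k) + d k - z) = 0" by simp
    thus False using im by simp
  qed
  define b where "b = d k - z"
  define D where "D t = A + 2 * Re (cnj t * u k) + (cmod t)\<^sup>2" for t :: complex
  define v where "v t = (\<lambda>m. u m + t * \<delta> m)" for t
  have normv: "(\<lambda>m. (cmod (v t m))\<^sup>2) summable_on UNIV \<and> infsum (\<lambda>m. (cmod (v t m))\<^sup>2) UNIV = D t" for t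
  proof -
    define h where "h m = (if m = k then 2 * Re (cnj t * u k) + (cmod t)\<^sup>2 else 0)" for m
    have eq: "(cmod (v t m))\<^sup>2 = (cmod (u m))\<^sup>2 + h m" for m
      by (simp add: v_def \<delta>_def h_def cmod_add_sq)
    have h0: "h m = 0" if "m \<notin> {k}" for m using that by (simp add: h_def)
    have hs: "h summable_on UNIV" "infsum h UNIV = sum h {k}"
      using infsum_fin_supp[of "{k}" h] h0 by auto
    show ?thesis unfolding eq
      using summable_on_add[OF sumA hs(1)] infsum_add[OF sumA hs(1)] hs(2)
      by (simp add: A_def D_def h_def)
  qed
  have innerv: "l2inner (jacobi d (v t)) (v t) = z * of_real (D t) + t * a + of_real ((cmod t)\<^sup>2) * b" for t
  proof -
    have Jv: "jacobi d (v t) m = z * u m + t * T m" for m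
      unfolding v_def jacobi_lin T_def using fun_cong[OF eig, of m] by simp
    define h where "h m = z * u m * cnj t * cnj (\<delta> m) + t * T m * cnj (u m) + t * T m * cnj t * cnj (\<delta> m)" for m
    have eq: "jacobi d (v t) m * cnj (v t m) = z * of_real ((cmod (u m))\<^sup>2) + h m" for m
      unfolding Jv complex_norm_square by (simp add: h_def v_def algebra_simps)
    have h0: "h m = 0" if "m \<notin> F" for m using that T0[OF that] by (simp add: h_def \<delta>_def F_def)
    have hs: "h summable_on UNIV" "infsum h UNIV = sum h F"
      using infsum_fin_supp[OF finF, of h] h0 by auto
    have sA: "(\<lambda>m. z * of_real ((cmod (u m))\<^sup>2)) summable_on UNIV"
      by (rule summable_on_cmult_right, rule summable_on_of_real, rule sumA)
    have iA: "infsum (\<lambda>m. z * of_real ((cmod (u m))\<^sup>2)) UNIV = z * of_real A"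
    proof -
      have "infsum (\<lambda>m. of_real ((cmod (u m))\<^sup>2) :: complex) UNIV = of_real A"
        unfolding A_def by (rule infsumI, rule has_sum_of_real, rule has_sum_infsum, rule sumA)
      thus ?thesis by (simp add: infsum_cmult_right')
    qed
    have sh: "sum h F = z * u k * cnj t + t * a' + t * d k * cnj t"
    proof -
      have "sum h F = (\<Sum>m\<in>F. z * u m * cnj t * cnj (\<delta> m)) + (\<Sum>m\<in>F. t * T m * cnj (u m))
           + (\<Sum>m\<in>F. t * T m * cnj t * cnj (\<delta> m))"
        unfolding h_def by (simp add: sum.distrib)
      also have "(\<Sum>m\<in>F. z * u m * cnj t * cnj (\<delta> m)) = z * u k * cnj t"
        using finF by (simp add: \<delta>_def F_def if_distrib cong: if_cong)
      also have "(\<Sum>m\<in>F. t * T m * cnj t * cnj (\<delta> m)) = t * d k * cnj t"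
        using finF Tk by (simp add: \<delta>_def F_def if_distrib cong: if_cong)
      also have "(\<Sum>m\<in>F. t * T m * cnj (u m)) = t * a'"
        unfolding a'_def by (simp add: sum_distrib_left mult.assoc)
      finally show ?thesis by simp
    qed
    have "l2inner (jacobi d (v t)) (v t) = z * of_real A + (z * u k * cnj t + t * a' + t * d k * cnj t)"
      unfolding l2inner_def eq infsum_add[OF sA hs(1)] iA hs(2) sh ..
    also have "\<dots> = z * of_real (D t) + t * a + of_real ((cmod t)\<^sup>2) * b"
    proof -
      have c1: "complex_of_real (2 * Re (cnj t * u k)) = cnj t * u k + t * cnj (u k)"
        using complex_add_cnj[of "cnj t * u k"] by simp
      have c2: "complex_of_real ((cmod t)\<^sup>2) = t * cnj t" by (rule complex_norm_square)
      show ?thesis unfolding D_def a_def b_def of_real_add c1 c2 by (simp add: algebra_simps)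
    qed
    finally show ?thesis .
  qed
  have Dge: "D t \<ge> 0" for t
    using normv[of t] infsum_nonneg[of UNIV "\<lambda>m. (cmod (v t m))\<^sup>2"] by simp
  define r where "r = min 1 (cmod a / (2 * (cmod b + 1)))"
  have "2 * (cmod b + 1) > 0" by (smt (verit) norm_ge_zero)
  hence "cmod a / (2 * (cmod b + 1)) > 0" using a_ne by (intro divide_pos_pos) auto
  hence r0: "r > 0" "r \<le> 1" by (auto simp: r_def)
  have rb: "r * cmod b \<le> cmod a / 2"
  proof -
    have "r * cmod b \<le> r * (cmod b + 1)" using r0 by simp
    also have "\<dots> \<le> cmod a / (2 * (cmod b + 1)) * (cmod b + 1)"
      by (rule mult_right_mono) (auto simp: r_def)
    also have "\<dots> = cmod a / 2"
      using \<open>2 * (cmod b + 1) > 0\<close> by (simp add: divide_simps)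
    finally show ?thesis .
  qed
  define K where "K = A + 2 * cmod (u k) + 1"
  have K0: "K > 0" using A_pos by (simp add: K_def add_pos_nonneg)
  define \<epsilon> where "\<epsilon> = r * cmod a / (2 * K)"
  have \<epsilon>0: "\<epsilon> > 0" using r0 a_ne K0 by (simp add: \<epsilon>_def)
  have Dbound: "\<bar>D t\<bar> \<le> K" if t: "cmod t \<le> r" for t
  proof -
    have t1: "cmod t \<le> 1" using t r0 by simp
    have "\<bar>Re (cnj t * u k)\<bar> \<le> cmod (cnj t * u k)" by (rule abs_Re_le_cmod)
    also have "\<dots> = cmod t * cmod (u k)" by (simp add: norm_mult)
    also have "\<dots> \<le> 1 * cmod (u k)" by (rule mult_right_mono) (use t1 in auto)
    finally have h1: "\<bar>Re (cnj t * u k)\<bar> \<le> cmod (u k)" by simp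
    have h2: "(cmod t)\<^sup>2 \<le> 1" using t1 by (simp add: power_le_one)
    have h3: "(cmod t)\<^sup>2 \<ge> 0" by simp
    show ?thesis unfolding D_def K_def abs_le_iff using h1[unfolded abs_le_iff] h2 h3 A_pos
      by (intro conjI) linarith+
  qed
  have "ball z \<epsilon> \<subseteq> numrange d"
  proof
    fix w assume "w \<in> ball z \<epsilon>"
    hence ee: "cmod (w - z) < \<epsilon>" by (simp add: dist_norm norm_minus_commute)
    define e where "e = w - z"
    define f where "f t = (e * of_real (D t) - of_real ((cmod t)\<^sup>2) * b) / a" for t
    have cont: "continuous_on (cball 0 r) f"
      unfolding f_def D_def by (intro continuous_intros) (simp add: a_ne)
    have maps: "f \<in> cball 0 r \<rightarrow> cball 0 r"
    proof
      fix t :: complex assume "t \<in> cball 0 r"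
      hence t: "cmod t \<le> r" by simp
      have "cmod (e * of_real (D t) - of_real ((cmod t)\<^sup>2) * b)
          \<le> cmod (e * of_real (D t)) + cmod (of_real ((cmod t)\<^sup>2) * b)" by (rule norm_triangle_ineq4)
      also have "cmod (e * of_real (D t)) = cmod e * \<bar>D t\<bar>" by (simp add: norm_mult)
      also have "cmod (of_real ((cmod t)\<^sup>2) * b) = (cmod t)\<^sup>2 * cmod b"
        unfolding norm_mult norm_of_real by simp
      also have "cmod e * \<bar>D t\<bar> \<le> \<epsilon> * K"
        using ee Dbound[OF t] \<epsilon>0 by (intro mult_mono) (auto simp: e_def)
      also have "(cmod t)\<^sup>2 * cmod b \<le> r * (r * cmod b)"
      proof -
        have "(cmod t)\<^sup>2 \<le> r * r" unfolding power2_eq_square using t r0(1) by (intro mult_mono) auto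
        thus ?thesis by (simp add: mult_right_mono mult.assoc[symmetric])
      qed
      also have "r * (r * cmod b) \<le> r * (cmod a / 2)" using rb r0 by simp
      also have "\<epsilon> * K = r * (cmod a / 2)" using K0 by (simp add: \<epsilon>_def field_simps)
      finally have "cmod (e * of_real (D t) - of_real ((cmod t)\<^sup>2) * b) \<le> r * cmod a" by simp
      hence "cmod (f t) \<le> r" using a_ne by (simp add: f_def norm_divide divide_le_eq)
      thus "f t \<in> cball 0 r" by simp
    qed
    obtain t where t: "t \<in> cball 0 r" "f t = t"
      using brouwer_ball[OF r0(1) cont maps] by blast
    have ta: "t * a = e * of_real (D t) - of_real ((cmod t)\<^sup>2) * b"
      using t(2) a_ne unfolding f_def by (simp add: field_simps)
    have Dpos: "D t > 0"
    proof (rule ccontr)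
      assume "\<not> D t > 0"
      hence D0: "D t = 0" using Dge[of t] by simp
      hence "t * a = - (of_real ((cmod t)\<^sup>2) * b)" using ta by simp
      hence "cmod t * cmod a = (cmod t)\<^sup>2 * cmod b" by (metis norm_minus_cancel norm_mult norm_of_real abs_power2 norm_ge_zero abs_norm_cancel)
      also have "\<dots> \<le> cmod t * (r * cmod b)"
        using t(1) unfolding power2_eq_square mult.assoc by (intro mult_left_mono mult_right_mono) auto
      also have "\<dots> \<le> cmod t * (cmod a / 2)" using rb by (intro mult_left_mono) auto
      finally have "cmod t * cmod a \<le> 0" by (simp add: algebra_simps)
      hence "t = 0" using a_ne by (simp add: mult_le_0_iff)
      thus False using D0 A_pos by (simp add: D_def)
    qed
    have inner: "l2inner (jacobi d (v t)) (v t) = w * of_real (D t)"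
      using innerv[of t] ta by (simp add: e_def algebra_simps)
    define c where "c = 1 / sqrt (D t)"
    have c2: "c\<^sup>2 * D t = 1" using Dpos by (simp add: c_def power_divide)
    define y where "y = (\<lambda>m. of_real c * v t m)"
    have ysq: "(cmod (y m))\<^sup>2 = c\<^sup>2 * (cmod (v t m))\<^sup>2" for m
      by (simp add: y_def norm_mult power_mult_distrib)
    have yl2: "y \<in> l2"
      unfolding l2_def using summable_on_cmult_right[OF conjunct1[OF normv[of t]], of "c\<^sup>2"]
      by (simp add: ysq)
    have ny: "l2norm y = 1"
      unfolding l2norm_def ysq infsum_cmult_right' using normv[of t] c2 by simp
    have iy: "l2inner (jacobi d y) y = w"
    proof -
      have "jacobi d y m * cnj (y m) = of_real (c\<^sup>2) * (jacobi d (v t) m * cnj (v t m))" for m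
        unfolding y_def jacobi_scale by (simp add: power2_eq_square)
      hence "l2inner (jacobi d y) y = of_real (c\<^sup>2) * l2inner (jacobi d (v t)) (v t)"
        unfolding l2inner_def by (simp add: infsum_cmult_right')
      also have "\<dots> = w * of_real (c\<^sup>2 * D t)" unfolding inner by simp
      finally show ?thesis using c2 by simp
    qed
    show "w \<in> numrange d" unfolding numrange_def using yl2 ny iy by blast
  qed
  thus ?thesis using \<epsilon>0 mem_interior by blast
qed


theorem mainTheorem6:
  fixes d :: "int^'n \<Rightarrow> complex" and z :: complex
  assumes "bounded (range d)"
    and "\<exists>j. ((\<lambda>n::int. SUP k\<in>{k :: int^'n. k $ j = n}. \<bar>Im (d k)\<bar>) \<longlongrightarrow> 0) at_top
           \<or> ((\<lambda>n::int. SUP k\<in>{k :: int^'n. k $ j = n}. \<bar>Im (d k)\<bar>) \<longlongrightarrow> 0) at_bot"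
    and "boundary_eigenvalue d z"
  shows "z \<in> \<real>"
proof -
  from assms(3) obtain u where u: "u \<in> l2" "u \<noteq> (\<lambda>_. 0)" "jacobi d u = (\<lambda>k. z * u k)"
    and fr: "z \<in> frontier (numrange d)"
    unfolding boundary_eigenvalue_def is_eigenvalue_def by blast
  have nint: "z \<notin> interior (numrange d)" using fr by (simp add: frontier_def)
  have supp: "Im (d k) = Im z" if "u k \<noteq> 0" for k
    using interior_lemma[OF u(1) u(3) that] nint by blast
  show ?thesis unfolding complex_is_Real_iff
  proof (rule ccontr)
    assume imz: "Im z \<noteq> 0"
    obtain B where B: "\<forall>x\<in>range d. norm x \<le> B" using assms(1) bounded_iff by blast
    have bdd: "bdd_above ((\<lambda>k. \<bar>Im (d k)\<bar>) ` S)" for S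
    proof (rule bdd_aboveI2)
      fix k
      have "cmod (d k) \<le> B" using B by blast
      thus "\<bar>Im (d k)\<bar> \<le> B" using abs_Im_le_cmod[of "d k"] by linarith
    qed
    have J0eq: "J0 u k = (z - d k) * u k" for k
      using fun_cong[OF u(3), of k] by (simp add: jacobi_def algebra_simps)
    have small: "u k = 0" if "\<bar>Im (d k)\<bar> < \<bar>Im z\<bar>" for k
      using supp[of k] that by force
    have le_sup: "\<bar>Im (d k)\<bar> \<le> (SUP k'\<in>{k' :: int^'n. k' $ j = k $ j}. \<bar>Im (d k')\<bar>)" for k j
      by (rule cSUP_upper) (auto intro: bdd)
    from assms(2) obtain j where
      "((\<lambda>n::int. SUP k\<in>{k :: int^'n. k $ j = n}. \<bar>Im (d k)\<bar>) \<longlongrightarrow> 0) at_top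
           \<or> ((\<lambda>n::int. SUP k\<in>{k :: int^'n. k $ j = n}. \<bar>Im (d k)\<bar>) \<longlongrightarrow> 0) at_bot" by blast
    hence "\<forall>k. u k = 0"
    proof
      assume lim: "((\<lambda>n::int. SUP k\<in>{k :: int^'n. k $ j = n}. \<bar>Im (d k)\<bar>) \<longlongrightarrow> 0) at_top"
      have "eventually (\<lambda>n. (SUP k\<in>{k :: int^'n. k $ j = n}. \<bar>Im (d k)\<bar>) < \<bar>Im z\<bar>) at_top"
        using order_tendstoD(2)[OF lim] imz by simp
      then obtain N where N: "\<And>n. n \<ge> N \<Longrightarrow> (SUP k\<in>{k :: int^'n. k $ j = n}. \<bar>Im (d k)\<bar>) < \<bar>Im z\<bar>"
        by (auto simp: eventually_at_top_linorder)
      have z0: "u k = 0" if "1 * k $ j \<ge> N" for k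
      proof -
        have "\<bar>Im (d k)\<bar> < \<bar>Im z\<bar>" using le_sup[of k j] N[of "k $ j"] that by simp
        thus ?thesis by (rule small)
      qed
      show ?thesis using vanish[of u "\<lambda>k. z - d k" 1 N j, OF J0eq _ z0] by simp
    next
      assume lim: "((\<lambda>n::int. SUP k\<in>{k :: int^'n. k $ j = n}. \<bar>Im (d k)\<bar>) \<longlongrightarrow> 0) at_bot"
      have "eventually (\<lambda>n. (SUP k\<in>{k :: int^'n. k $ j = n}. \<bar>Im (d k)\<bar>) < \<bar>Im z\<bar>) at_bot"
        using order_tendstoD(2)[OF lim] imz by simp
      then obtain N where N: "\<And>n. n \<le> N \<Longrightarrow> (SUP k\<in>{k :: int^'n. k $ j = n}. \<bar>Im (d k)\<bar>) < \<bar>Im z\<bar>"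
        by (auto simp: eventually_at_bot_linorder)
      have z0: "u k = 0" if "(-1) * k $ j \<ge> - N" for k
      proof -
        have "\<bar>Im (d k)\<bar> < \<bar>Im z\<bar>" using le_sup[of k j] N[of "k $ j"] that by simp
        thus ?thesis by (rule small)
      qed
      show ?thesis using vanish[of u "\<lambda>k. z - d k" "-1" "-N" j, OF J0eq _ z0] by simp
    qed
    with u(2) show False by auto
  qed
qed

end
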